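(* Let $d\ge 1$, let $H$ be a $d\times d$ complex matrix that is both Hermitian and unitary, let $m\ge 1$ be an integer and let $\tau>0$. On $(\mathbb{C}^d)^{\otimes m}$ let $H_{\|}(m)=\sum_{i=1}^m H[i]$ and $H_{\#}(m)=H^{\otimes m}$, where $H[i]=I^{\otimes (i-1)}\otimes H\otimes I^{\otimes (m-i)}$. For $X\in\{\|,\#\}$ define the implementation time $$T_X=\inf\Big\{t\ge 0:\ \exists\,\lambda\in\mathbb{R},\ \exists\,\varphi\in\mathbb{R}\ \text{with}\ p\big(\lambda H_X(m)\big)\le\tau\ \text{and}\ e^{-it\lambda H_X(m)}=e^{i\varphi}H^{\otimes m}\Big\},$$ i.e. the least time needed to implement the $m$ parallel gates $H^{\otimes m}$ (up to global phase) by evolving under a rescaling of $H_X(m)$ whose energy spread is at most $\tau$. Then implementing the $m$ gates using the standard parallel Hamiltonian is $m$ times slower than using the coherent one: $T_{\|}=m\,T_{\#}$.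
   Context: For a Hermitian operator $A$ on a finite-dimensional Hilbert space, $p(A)=h_{\max}-h_{\min}$, where $h_{\max}$ and $h_{\min}$ are the largest and smallest eigenvalues of $A$. The quantity $p$ of the Hamiltonian is the energetic resource that is held fixed (bounded by $\tau$) when comparing implementations. *)

theory Defs
  imports "Jordan_Normal_Form.Char_Poly"
begin

definition adj :: "complex mat \<Rightarrow> complex mat" where
  "adj A = mat (dim_col A) (dim_row A) (\<lambda>(i,j). cnj (A $$ (j,i)))"

definition hermitian_mat :: "complex mat \<Rightarrow> bool" where
  "hermitian_mat A \<longleftrightarrow> dim_row A = dim_col A \<and> adj A = A"

definition unitary_mat :: "complex mat \<Rightarrow> bool" where
  "unitary_mat A \<longleftrightarrow> dim_row A = dim_col A \<and> A * adj A = 1\<^sub>m (dim_row A)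
     \<and> adj A * A = 1\<^sub>m (dim_row A)"

definition kron :: "complex mat \<Rightarrow> complex mat \<Rightarrow> complex mat" where
  "kron A B = mat (dim_row A * dim_row B) (dim_col A * dim_col B)
     (\<lambda>(i,j). A $$ (i div dim_row B, j div dim_col B) * B $$ (i mod dim_row B, j mod dim_col B))"

fun tpow :: "complex mat \<Rightarrow> nat \<Rightarrow> complex mat" where
  "tpow A 0 = 1\<^sub>m 1"
| "tpow A (Suc k) = kron A (tpow A k)"

definition local_op :: "complex mat \<Rightarrow> nat \<Rightarrow> nat \<Rightarrow> complex mat" where
  "local_op H m i = kron (kron (tpow (1\<^sub>m (dim_row H)) (i - 1)) H) (tpow (1\<^sub>m (dim_row H)) (m - i))"

definition H_par :: "complex mat \<Rightarrow> nat \<Rightarrow> complex mat" where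
  "H_par H m = mat (dim_row H ^ m) (dim_row H ^ m)
     (\<lambda>ij. \<Sum>i=1..m. local_op H m i $$ ij)"

definition H_coh :: "complex mat \<Rightarrow> nat \<Rightarrow> complex mat" where
  "H_coh H m = tpow H m"

definition mexp :: "complex mat \<Rightarrow> complex mat" where
  "mexp M = mat (dim_row M) (dim_col M) (\<lambda>(i,j). \<Sum>k. (M ^\<^sub>m k) $$ (i,j) / of_nat (fact k))"

text \<open>p(A) = h_max - h_min (eigenvalues of a Hermitian matrix are real).\<close>
definition spread :: "complex mat \<Rightarrow> real" where
  "spread A = Max (Re ` {k. eigenvalue A k}) - Min (Re ` {k. eigenvalue A k})"

definition impl_time :: "complex mat \<Rightarrow> complex mat \<Rightarrow> nat \<Rightarrow> real \<Rightarrow> real" where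
  "impl_time Hx H m \<tau> = Inf {t::real. t \<ge> 0 \<and> (\<exists>(l::real) (\<phi>::real).
      spread (complex_of_real l \<cdot>\<^sub>m Hx) \<le> \<tau> \<and>
      mexp ((- (\<i> * complex_of_real t * complex_of_real l)) \<cdot>\<^sub>m Hx) = exp (\<i> * complex_of_real \<phi>) \<cdot>\<^sub>m tpow H m)}"

end

theory Submission
  imports Defs
begin

lemma sum_div_mod:
  assumes "(e::nat) > 0"
  shows "(\<Sum>k\<in>{0..<b*e}. f (k div e) (k mod e)) = (\<Sum>i\<in>{0..<b}. \<Sum>j\<in>{0..<e}. f i j)"
proof (induction b)
  case 0 then show ?case by simp
next
  case (Suc b)
  have "{0..<Suc b * e} = {0..<b*e} \<union> {b*e..<b*e+e}" by (auto simp: ivl_disj_un_two)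
  then have "(\<Sum>k\<in>{0..<Suc b*e}. f (k div e) (k mod e)) = (\<Sum>k\<in>{0..<b*e}. f (k div e) (k mod e)) + (\<Sum>k\<in>{b*e..<b*e+e}. f (k div e) (k mod e))"
    by (simp add: sum.union_disjoint)
  also have "(\<Sum>k\<in>{b*e..<b*e+e}. f (k div e) (k mod e)) = (\<Sum>j\<in>{0..<e}. f ((j + b*e) div e) ((j+b*e) mod e))"
    using sum.shift_bounds_nat_ivl[of "\<lambda>k. f (k div e) (k mod e)" 0 "b*e" e] by (simp add: add.commute)
  also have "\<dots> = (\<Sum>j\<in>{0..<e}. f b j)"
    using assms by simp
  finally show ?case using Suc.IH by (simp add: sum.atLeast0_lessThan_Suc)
qed

lemma kron_dims[simp]: "dim_row (kron A B) = dim_row A * dim_row B" "dim_col (kron A B) = dim_col A * dim_col B"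
  by (auto simp: kron_def)

lemma kron_carrier[simp,intro]: "A \<in> carrier_mat a b \<Longrightarrow> B \<in> carrier_mat c e \<Longrightarrow> kron A B \<in> carrier_mat (a*c) (b*e)"
  unfolding carrier_mat_def by simp

lemma index_kron[simp]: "i < dim_row A * dim_row B \<Longrightarrow> j < dim_col A * dim_col B \<Longrightarrow>
  kron A B $$ (i,j) = A $$ (i div dim_row B, j div dim_col B) * B $$ (i mod dim_row B, j mod dim_col B)"
  by (simp add: kron_def)

lemma kron_mult:
  assumes A: "A \<in> carrier_mat a b" and B: "B \<in> carrier_mat c e" and C: "C \<in> carrier_mat b f" and D: "D \<in> carrier_mat e g"
    and pos: "c > 0" "e > 0" "g > 0"
  shows "kron A B * kron C D = kron (A * C) (B * D)"
proof -
  note dA = carrier_matD[OF A] and dB = carrier_matD[OF B] and dC = carrier_matD[OF C] and dD = carrier_matD[OF D]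
  show ?thesis
  proof (rule eq_matI)
  fix i j assume i: "i < dim_row (kron (A * C) (B * D))" and j: "j < dim_col (kron (A * C) (B * D))"
  have i': "i < a * c" and j': "j < f * g" using i j dA dB dC dD by simp_all
  have idiv: "i div c < a" "i mod c < c" using i' pos by (simp_all add: less_mult_imp_div_less mult.commute)
  have jdiv: "j div g < f" "j mod g < g" using j' pos by (simp_all add: less_mult_imp_div_less mult.commute)
  have "(kron A B * kron C D) $$ (i,j) = (\<Sum>k\<in>{0..<b*e}. kron A B $$ (i,k) * kron C D $$ (k,j))"
    using dA dB dC dD i' j' by (simp add: scalar_prod_def)
  also have "\<dots> = (\<Sum>k\<in>{0..<b*e}. (\<lambda>k1 k2. A $$ (i div c, k1) * B $$ (i mod c, k2) * (C $$ (k1, j div g) * D $$ (k2, j mod g))) (k div e) (k mod e))"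
  proof (rule sum.cong[OF refl])
    fix k assume k: "k \<in> {0..<b*e}"
    then show "kron A B $$ (i,k) * kron C D $$ (k,j) = (\<lambda>k1 k2. A $$ (i div c, k1) * B $$ (i mod c, k2) * (C $$ (k1, j div g) * D $$ (k2, j mod g))) (k div e) (k mod e)"
      using dA dB dC dD i' j' by (simp add: ac_simps)
  qed
  also have "\<dots> = (\<Sum>k1\<in>{0..<b}. \<Sum>k2\<in>{0..<e}. A $$ (i div c, k1) * B $$ (i mod c, k2) * (C $$ (k1, j div g) * D $$ (k2, j mod g)))"
    by (rule sum_div_mod[OF pos(2)])
  also have "\<dots> = (\<Sum>k1\<in>{0..<b}. A $$ (i div c, k1) * C $$ (k1, j div g)) * (\<Sum>k2\<in>{0..<e}. B $$ (i mod c, k2) * D $$ (k2, j mod g))"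
    by (simp only: sum_product) (simp add: ac_simps)
  also have "\<dots> = kron (A * C) (B * D) $$ (i,j)"
    using dA dB dC dD i' j' idiv jdiv by (simp add: scalar_prod_def)
  finally show "(kron A B * kron C D) $$ (i,j) = kron (A * C) (B * D) $$ (i,j)" .
  qed (simp_all add: dA dB dC dD)
qed

lemma kron_smult_left: "kron (x \<cdot>\<^sub>m A) B = x \<cdot>\<^sub>m kron A B"
proof (rule eq_matI)
  fix i j assume "i < dim_row (x \<cdot>\<^sub>m kron A B)" "j < dim_col (x \<cdot>\<^sub>m kron A B)"
  then have ij: "i < dim_row A * dim_row B" "j < dim_col A * dim_col B" by simp_all
  then have "i div dim_row B < dim_row A" "j div dim_col B < dim_col A" by (simp_all add: less_mult_imp_div_less)
  then show "kron (x \<cdot>\<^sub>m A) B $$ (i, j) = (x \<cdot>\<^sub>m kron A B) $$ (i, j)" using ij by simp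
qed simp_all

lemma kron_smult_right: "kron A (x \<cdot>\<^sub>m B) = x \<cdot>\<^sub>m kron A B"
proof (rule eq_matI)
  fix i j assume "i < dim_row (x \<cdot>\<^sub>m kron A B)" "j < dim_col (x \<cdot>\<^sub>m kron A B)"
  then have ij: "i < dim_row A * dim_row B" "j < dim_col A * dim_col B" by simp_all
  then have "dim_row B > 0" "dim_col B > 0" by (rule_tac ccontr, simp)+
  then have "i mod dim_row B < dim_row B" "j mod dim_col B < dim_col B" by simp_all
  then show "kron A (x \<cdot>\<^sub>m B) $$ (i, j) = (x \<cdot>\<^sub>m kron A B) $$ (i, j)" using ij by simp
qed simp_all

lemma kron_add_left: assumes "A \<in> carrier_mat a b" "B \<in> carrier_mat a b" "C \<in> carrier_mat c e" "c > 0" "e > 0"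
  shows "kron (A + B) C = kron A C + kron B C"
proof -
  note d = carrier_matD[OF assms(1)] carrier_matD[OF assms(2)] carrier_matD[OF assms(3)]
  show ?thesis
  proof (rule eq_matI)
    fix i j assume "i < dim_row (kron A C + kron B C)" "j < dim_col (kron A C + kron B C)"
    then have ij: "i < a * c" "j < b * e" using d by simp_all
    then have "i div c < a" "j div e < b" using assms(4,5) by (simp_all add: less_mult_imp_div_less)
    then show "kron (A + B) C $$ (i, j) = (kron A C + kron B C) $$ (i, j)"
      using ij d by (simp add: algebra_simps)
  qed (simp_all add: d)
qed

lemma kron_add_right: assumes "A \<in> carrier_mat a b" "B \<in> carrier_mat c e" "C \<in> carrier_mat c e" "c > 0" "e > 0"
  shows "kron A (B + C) = kron A B + kron A C"
proof -
  note d = carrier_matD[OF assms(1)] carrier_matD[OF assms(2)] carrier_matD[OF assms(3)]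
  show ?thesis
  proof (rule eq_matI)
    fix i j assume "i < dim_row (kron A B + kron A C)" "j < dim_col (kron A B + kron A C)"
    then have ij: "i < a * c" "j < b * e" using d by simp_all
    then have "i mod c < c" "j mod e < e" using assms(4,5) by simp_all
    then show "kron A (B + C) $$ (i, j) = (kron A B + kron A C) $$ (i, j)"
      using ij d by (simp add: algebra_simps)
  qed (simp_all add: d)
qed

lemma kron_one: assumes "(b::nat) > 0" shows "kron (1\<^sub>m a) (1\<^sub>m b) = 1\<^sub>m (a * b)"
proof (rule eq_matI)
  fix i j assume "i < dim_row (1\<^sub>m (a * b) :: complex mat)" "j < dim_col (1\<^sub>m (a * b) :: complex mat)"
  then have ij: "i < a * b" "j < a * b" by simp_all
  then have lt: "i div b < a" "j div b < a" by (simp_all add: less_mult_imp_div_less)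
  have iff: "(i div b = j div b \<and> i mod b = j mod b) = (i = j)"
    by (metis div_mult_mod_eq)
  have "kron (1\<^sub>m a) (1\<^sub>m b) $$ (i, j) = (if i div b = j div b \<and> i mod b = j mod b then 1 else 0)"
    using ij lt assms by simp
  then show "kron (1\<^sub>m a) (1\<^sub>m b) $$ (i, j) = 1\<^sub>m (a * b) $$ (i, j)"
    using ij iff by simp
qed simp_all

lemma kron_one_left: "kron (1\<^sub>m 1) A = A"
proof (rule eq_matI)
  fix i j assume "i < dim_row A" "j < dim_col A"
  then show "kron (1\<^sub>m 1) A $$ (i, j) = A $$ (i, j)" by simp
qed simp_all

lemma div_mod_aux: "((i::nat) mod (b * c)) div c = (i div c) mod b"
proof (cases "c = 0")
  case False
  have "i mod (b*c) = c * (i div c mod b) + i mod c" using mod_mult2_eq[of i c b] by (simp add: mult.commute)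
  then show ?thesis using False by simp
qed simp

lemma kron_assoc: "kron (kron A B) C = kron A (kron B C)"
proof (rule eq_matI)
  fix i j assume i: "i < dim_row (kron A (kron B C))" and j: "j < dim_col (kron A (kron B C))"
  have i1: "i < dim_row A * dim_row B * dim_row C" and j1: "j < dim_col A * dim_col B * dim_col C"
    using i j by (simp_all add: mult.assoc)
  have pr: "dim_row C > 0" "dim_row B > 0" "dim_col C > 0" "dim_col B > 0"
    using i1 j1 by (rule_tac ccontr, simp)+
  have i2: "i div dim_row C < dim_row A * dim_row B" using i1 by (simp add: less_mult_imp_div_less)
  have j2: "j div dim_col C < dim_col A * dim_col B" using j1 by (simp add: less_mult_imp_div_less)
  have i3: "i mod (dim_row B * dim_row C) < dim_row B * dim_row C" using pr by simp
  have j3: "j mod (dim_col B * dim_col C) < dim_col B * dim_col C" using pr by simp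
  have f1: "i div (dim_row B * dim_row C) = i div dim_row C div dim_row B" "j div (dim_col B * dim_col C) = j div dim_col C div dim_col B"
    by (metis div_mult2_eq mult.commute)+
  have f2: "i mod (dim_row B * dim_row C) div dim_row C = i div dim_row C mod dim_row B"
     "j mod (dim_col B * dim_col C) div dim_col C = j div dim_col C mod dim_col B"
    by (simp_all only: div_mod_aux)
  have f3: "i mod (dim_row B * dim_row C) mod dim_row C = i mod dim_row C"
     "j mod (dim_col B * dim_col C) mod dim_col C = j mod dim_col C"
    by (simp_all add: mod_mod_cancel)
  have "kron A (kron B C) $$ (i, j) = A $$ (i div (dim_row B * dim_row C), j div (dim_col B * dim_col C)) *
     (B $$ (i mod (dim_row B * dim_row C) div dim_row C, j mod (dim_col B * dim_col C) div dim_col C) *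
      C $$ (i mod (dim_row B * dim_row C) mod dim_row C, j mod (dim_col B * dim_col C) mod dim_col C))"
    using i1 j1 i3 j3 by (simp del: mod_mult2_eq div_mult2_eq add: mult.assoc)
  also have "\<dots> = kron (kron A B) C $$ (i, j)"
    using i1 j1 i2 j2 pr unfolding f1 f2 f3 by (simp del: mod_mult2_eq div_mult2_eq)
  finally show "kron (kron A B) C $$ (i, j) = kron A (kron B C) $$ (i, j)" by simp
qed (simp_all add: mult.assoc)

lemma smult_smult_mat: "(x::complex) \<cdot>\<^sub>m (y \<cdot>\<^sub>m A) = (x * y) \<cdot>\<^sub>m A"
  by (rule eq_matI) simp_all

lemma one_smult_mat': "(1::complex) \<cdot>\<^sub>m A = A"
  by (rule eq_matI) simp_all

lemma tpow_carrier: "A \<in> carrier_mat d d \<Longrightarrow> tpow A m \<in> carrier_mat (d^m) (d^m)"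
proof (induction m)
  case 0 then show ?case by simp
next
  case (Suc m) then show ?case using kron_carrier[OF Suc.prems Suc.IH] by simp
qed

lemma tpow_one: "d > 0 \<Longrightarrow> tpow (1\<^sub>m d) m = 1\<^sub>m (d^m)"
proof (induction m)
  case 0 then show ?case by simp
next
  case (Suc m) then show ?case using kron_one[of "d^m" d] by simp
qed

lemma tpow_smult: "tpow (x \<cdot>\<^sub>m A) m = x^m \<cdot>\<^sub>m tpow A m"
proof (induction m)
  case 0 then show ?case by (simp add: one_smult_mat')
next
  case (Suc m) then show ?case by (simp add: kron_smult_left kron_smult_right smult_smult_mat mult.commute)
qed

definition nz :: "complex mat \<Rightarrow> bool" where
  "nz X \<longleftrightarrow> (\<exists>i<dim_row X. \<exists>j<dim_col X. X $$ (i,j) \<noteq> 0)"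

lemma nz_kron: assumes "nz A" "nz B" shows "nz (kron A B)"
proof -
  obtain i1 j1 where 1: "i1 < dim_row A" "j1 < dim_col A" "A $$ (i1,j1) \<noteq> 0" using assms(1) unfolding nz_def by blast
  obtain i2 j2 where 2: "i2 < dim_row B" "j2 < dim_col B" "B $$ (i2,j2) \<noteq> 0" using assms(2) unfolding nz_def by blast
  have lt: "i1 * dim_row B + i2 < dim_row A * dim_row B" "j1 * dim_col B + j2 < dim_col A * dim_col B"
  proof -
    have "i1 * dim_row B + i2 < (i1 + 1) * dim_row B" using 2 by simp
    also have "\<dots> \<le> dim_row A * dim_row B" using 1 by (intro mult_right_mono) simp_all
    finally show "i1 * dim_row B + i2 < dim_row A * dim_row B" .
    have "j1 * dim_col B + j2 < (j1 + 1) * dim_col B" using 2 by simp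
    also have "\<dots> \<le> dim_col A * dim_col B" using 1 by (intro mult_right_mono) simp_all
    finally show "j1 * dim_col B + j2 < dim_col A * dim_col B" .
  qed
  have "kron A B $$ (i1 * dim_row B + i2, j1 * dim_col B + j2) = A $$ (i1,j1) * B $$ (i2,j2)"
    using lt 2 by simp
  then have ne: "kron A B $$ (i1 * dim_row B + i2, j1 * dim_col B + j2) \<noteq> 0" using 1 2 by simp
  show ?thesis unfolding nz_def kron_dims using lt ne by blast
qed

lemma nz_one: "nz (1\<^sub>m (Suc 0))" unfolding nz_def by (rule exI[of _ 0]) simp

lemma nz_tpow: "nz A \<Longrightarrow> nz (tpow A m)"
proof (induction m)
  case 0 show ?case using nz_one by simp
next
  case (Suc m) then show ?case by (simp add: nz_kron)
qed

lemma nz_smult: "x \<noteq> 0 \<Longrightarrow> nz A \<Longrightarrow> nz (x \<cdot>\<^sub>m A)"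
proof -
  assume x: "x \<noteq> 0" and "nz A"
  then obtain i j where ij: "i < dim_row A" "j < dim_col A" "A $$ (i,j) \<noteq> 0" unfolding nz_def by blast
  then have "(x \<cdot>\<^sub>m A) $$ (i,j) \<noteq> 0" using x by simp
  then show ?thesis unfolding nz_def using ij by (metis index_smult_mat(2,3))
qed

fun Mp :: "complex mat \<Rightarrow> nat \<Rightarrow> complex mat" where
  "Mp H 0 = 0\<^sub>m 1 1"
| "Mp H (Suc m) = kron H (1\<^sub>m (dim_row H ^ m)) + kron (1\<^sub>m (dim_row H)) (Mp H m)"

lemma Mp_carrier: "H \<in> carrier_mat d d \<Longrightarrow> Mp H m \<in> carrier_mat (d^m) (d^m)"
proof (induction m)
  case 0 then show ?case by simp
next
  case (Suc m)
  have "kron H (1\<^sub>m (d ^ m)) \<in> carrier_mat (d * d^m) (d * d^m)" using Suc.prems by (intro kron_carrier) simp_all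
  moreover have "kron (1\<^sub>m d) (Mp H m) \<in> carrier_mat (d * d^m) (d * d^m)" using Suc by (intro kron_carrier) simp_all
  ultimately show ?case using Suc.prems by simp
qed

lemma local_op_carrier: assumes "H \<in> carrier_mat d d" "1 \<le> i" "i \<le> m"
  shows "local_op H m i \<in> carrier_mat (d^m) (d^m)"
proof -
  have "d ^ (i - 1) * d * d ^ (m - i) = d ^ m"
  proof -
    have "m = (i - 1) + 1 + (m - i)" using assms(2,3) by simp
    then have "d ^ m = d ^ (i - 1) * d ^ 1 * d ^ (m - i)" by (metis power_add)
    then show ?thesis by simp
  qed
  moreover have "local_op H m i \<in> carrier_mat (d ^ (i - 1) * d * d ^ (m - i)) (d ^ (i - 1) * d * d ^ (m - i))"
    unfolding local_op_def using assms(1) by (intro kron_carrier tpow_carrier) (simp_all add: carrier_matD)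
  ultimately show ?thesis by simp
qed

lemma local_op_1: assumes "H \<in> carrier_mat d d" "d > 0"
  shows "local_op H (Suc m) 1 = kron H (1\<^sub>m (d^m))"
  using assms unfolding local_op_def by (simp add: carrier_matD kron_one_left[simplified] tpow_one)

lemma local_op_Suc: assumes "H \<in> carrier_mat d d" "d > 0" "1 \<le> i"
  shows "local_op H (Suc m) (Suc i) = kron (1\<^sub>m d) (local_op H m i)"
proof -
  obtain k where k: "i = Suc k" using assms(3) by (cases i) simp_all
  have dr: "dim_row H = d" using assms(1) by (simp add: carrier_matD)
  show ?thesis unfolding local_op_def dr k by (simp add: kron_assoc)
qed

lemma H_par_Mp: assumes H: "H \<in> carrier_mat d d" and d: "d > 0"
  shows "H_par H m = Mp H m"
proof (induction m)
  case 0
  show ?case by (rule eq_matI) (simp_all add: H_par_def)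
next
  case (Suc m)
  have dr: "dim_row H = d" using H by (simp add: carrier_matD)
  have Mc: "Mp H m \<in> carrier_mat (d^m) (d^m)" using Mp_carrier[OF H] .
  have dpos: "d^m > 0" using d by simp
  show ?case
  proof (rule eq_matI)
    fix a b assume "a < dim_row (Mp H (Suc m))" "b < dim_col (Mp H (Suc m))"
    then have ab: "a < d * d^m" "b < d * d^m" using Mc dr by (simp_all add: carrier_matD)
    have abd: "a div d^m < d" "b div d^m < d" using ab by (simp_all add: less_mult_imp_div_less mult.commute)
    have abm: "a mod d^m < d^m" "b mod d^m < d^m" using dpos by simp_all
    have "H_par H (Suc m) $$ (a,b) = (\<Sum>i=1..Suc m. local_op H (Suc m) i $$ (a,b))"
      using ab dr unfolding H_par_def by simp
    also have "\<dots> = local_op H (Suc m) 1 $$ (a,b) + (\<Sum>i=Suc 1..Suc m. local_op H (Suc m) i $$ (a,b))"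
      by (simp add: sum.atLeast_Suc_atMost)
    also have "(\<Sum>i=Suc 1..Suc m. local_op H (Suc m) i $$ (a,b)) = (\<Sum>i=1..m. local_op H (Suc m) (Suc i) $$ (a,b))"
      by (rule sum.shift_bounds_cl_Suc_ivl)
    also have "\<dots> = (\<Sum>i=1..m. kron (1\<^sub>m d) (local_op H m i) $$ (a,b))"
      by (rule sum.cong[OF refl]) (simp add: local_op_Suc[OF H d])
    also have "\<dots> = (\<Sum>i=1..m. 1\<^sub>m d $$ (a div d^m, b div d^m) * local_op H m i $$ (a mod d^m, b mod d^m))"
    proof (rule sum.cong[OF refl])
      fix i assume "i \<in> {1..m}"
      then have "local_op H m i \<in> carrier_mat (d^m) (d^m)" using local_op_carrier[OF H] by simp
      then show "kron (1\<^sub>m d) (local_op H m i) $$ (a,b) = 1\<^sub>m d $$ (a div d^m, b div d^m) * local_op H m i $$ (a mod d^m, b mod d^m)"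
        using ab by (simp add: carrier_matD)
    qed
    also have "\<dots> = 1\<^sub>m d $$ (a div d^m, b div d^m) * H_par H m $$ (a mod d^m, b mod d^m)"
      using abm dr unfolding H_par_def by (simp add: sum_distrib_left)
    also have "\<dots> = kron (1\<^sub>m d) (Mp H m) $$ (a,b)"
      using ab Mc Suc.IH by (simp add: carrier_matD)
    finally have e: "H_par H (Suc m) $$ (a,b) = local_op H (Suc m) 1 $$ (a,b) + kron (1\<^sub>m d) (Mp H m) $$ (a,b)" .
    have "local_op H (Suc m) 1 $$ (a,b) = kron H (1\<^sub>m (d^m)) $$ (a,b)" using local_op_1[OF H d] by simp
    then show "H_par H (Suc m) $$ (a,b) = Mp H (Suc m) $$ (a,b)"
      using e ab Mc dr by (simp add: carrier_matD)
  qed (use Mc in \<open>simp_all add: H_par_def dr carrier_matD\<close>)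
qed

lemma pow_eigen: fixes A :: "complex mat" assumes A: "A \<in> carrier_mat n n" and X: "X \<in> carrier_mat n k" and AX: "A * X = \<mu> \<cdot>\<^sub>m X"
  shows "(A ^\<^sub>m j) * X = (\<mu> ^ j) \<cdot>\<^sub>m X"
proof (induction j)
  case 0
  have "A ^\<^sub>m 0 = 1\<^sub>m n" using A by (simp add: carrier_matD)
  then show ?case using X by (simp add: one_smult_mat' carrier_matD)
next
  case (Suc j)
  have Aj: "A ^\<^sub>m j \<in> carrier_mat n n" by (rule carrier_matI[OF pow_mat_dim_square(1)[OF A] pow_mat_dim_square(2)[OF A]])
  have "(A ^\<^sub>m Suc j) * X = (A ^\<^sub>m j * A) * X" by simp
  also have "\<dots> = A ^\<^sub>m j * (A * X)" using Aj A X by (rule assoc_mult_mat)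
  also have "\<dots> = \<mu> \<cdot>\<^sub>m (A ^\<^sub>m j * X)" unfolding AX using Aj X by (rule mult_smult_distrib)
  also have "\<dots> = (\<mu> ^ Suc j) \<cdot>\<^sub>m X" unfolding Suc.IH by (simp only: smult_smult_mat power_Suc)
  finally show ?case .
qed

lemma pow_bound: fixes A :: "complex mat" assumes A: "A \<in> carrier_mat n n"
  shows "\<forall>i<n. \<forall>l<n. norm ((A ^\<^sub>m j) $$ (i,l)) \<le> (real n * (\<Sum>i<n. \<Sum>l<n. norm (A $$ (i,l)))) ^ j"
proof (induction j)
  case 0
  show ?case using A by (simp add: carrier_matD)
next
  case (Suc j)
  define B where "B = (\<Sum>i<n. \<Sum>l<n. norm (A $$ (i,l)))"
  have AB: "norm (A $$ (r,l)) \<le> B" if "r < n" "l < n" for r l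
  proof -
    have "norm (A $$ (r,l)) \<le> (\<Sum>l<n. norm (A $$ (r,l)))" using that by (intro member_le_sum) simp_all
    also have "\<dots> \<le> B" unfolding B_def using that by (intro member_le_sum[where f="\<lambda>r. \<Sum>l<n. norm (A $$ (r,l))"]) (simp_all add: sum_nonneg)
    finally show ?thesis .
  qed
  have Aj: "A ^\<^sub>m j \<in> carrier_mat n n" by (rule carrier_matI[OF pow_mat_dim_square(1)[OF A] pow_mat_dim_square(2)[OF A]])
  show ?case
  proof (intro allI impI)
    fix i l assume il: "i < n" "l < n"
    have "(A ^\<^sub>m Suc j) $$ (i,l) = (\<Sum>r\<in>{0..<n}. (A ^\<^sub>m j) $$ (i,r) * A $$ (r,l))"
      using A Aj il by (simp add: carrier_matD scalar_prod_def)
    then have "norm ((A ^\<^sub>m Suc j) $$ (i,l)) = norm (\<Sum>r\<in>{0..<n}. (A ^\<^sub>m j) $$ (i,r) * A $$ (r,l))"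
      by (simp only:)
    also have "\<dots> \<le> (\<Sum>r\<in>{0..<n}. norm ((A ^\<^sub>m j) $$ (i,r) * A $$ (r,l)))"
      by (rule norm_sum)
    also have "\<dots> = (\<Sum>r\<in>{0..<n}. norm ((A ^\<^sub>m j) $$ (i,r)) * norm (A $$ (r,l)))"
      by (simp only: norm_mult)
    also have "\<dots> \<le> (\<Sum>r\<in>{0..<n}. (real n * B) ^ j * B)"
    proof (rule sum_mono)
      fix r assume "r \<in> {0..<n}"
      then have r: "r < n" by simp
      show "norm ((A ^\<^sub>m j) $$ (i,r)) * norm (A $$ (r,l)) \<le> (real n * B) ^ j * B"
        using Suc.IH il r AB[OF r il(2)] unfolding B_def by (intro mult_mono) (simp_all add: sum_nonneg)
    qed
    also have "\<dots> = (real n * B) ^ Suc j" by simp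
    finally show "norm ((A ^\<^sub>m Suc j) $$ (i,l)) \<le> (real n * (\<Sum>i<n. \<Sum>l<n. norm (A $$ (i,l)))) ^ Suc j"
      unfolding B_def .
  qed
qed

lemma summable_entry: fixes A :: "complex mat" assumes A: "A \<in> carrier_mat n n" and il: "i < n" "l < n"
  shows "summable (\<lambda>j. (A ^\<^sub>m j) $$ (i,l) / of_nat (fact j))"
proof -
  define C where "C = real n * (\<Sum>i<n. \<Sum>l<n. norm (A $$ (i,l)))"
  have "summable (\<lambda>j. inverse (fact j) * C ^ j)" by (rule summable_exp)
  moreover have "norm ((A ^\<^sub>m j) $$ (i,l) / of_nat (fact j)) \<le> inverse (fact j) * C ^ j" for j
  proof -
    have "norm ((A ^\<^sub>m j) $$ (i,l) / of_nat (fact j)) = norm ((A ^\<^sub>m j) $$ (i,l)) / fact j"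
      by (simp add: norm_divide)
    also have "\<dots> \<le> C ^ j / fact j"
      using pow_bound[OF A, of j] il unfolding C_def by (intro divide_right_mono) simp_all
    finally show ?thesis by (simp add: divide_inverse mult.commute)
  qed
  ultimately show ?thesis by (rule summable_comparison_test')
qed

lemma exp_series: "(\<lambda>j. x ^ j / of_nat (fact j)) sums exp (x::complex)"
  using exp_converges[of x] by (simp add: scaleR_conv_of_real divide_inverse mult.commute)

lemma mexp_eigen: assumes A: "A \<in> carrier_mat n n" and X: "X \<in> carrier_mat n k" and AX: "A * X = \<mu> \<cdot>\<^sub>m X"
  shows "mexp A * X = exp \<mu> \<cdot>\<^sub>m X"
proof (rule eq_matI)
  fix i c assume "i < dim_row (exp \<mu> \<cdot>\<^sub>m X)" "c < dim_col (exp \<mu> \<cdot>\<^sub>m X)"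
  then have ic: "i < n" "c < k" using X by (simp_all add: carrier_matD)
  have dm: "dim_row (mexp A) = n" "dim_col (mexp A) = n" using A by (simp_all add: mexp_def carrier_matD)
  have "(mexp A * X) $$ (i,c) = (\<Sum>l\<in>{0..<n}. mexp A $$ (i,l) * X $$ (l,c))"
    using dm X ic by (simp add: carrier_matD scalar_prod_def)
  also have "\<dots> = (\<Sum>l\<in>{0..<n}. \<Sum>j. (A ^\<^sub>m j) $$ (i,l) / of_nat (fact j) * X $$ (l,c))"
  proof (rule sum.cong[OF refl])
    fix l assume "l \<in> {0..<n}"
    then have l: "l < n" by simp
    have "mexp A $$ (i,l) = (\<Sum>j. (A ^\<^sub>m j) $$ (i,l) / of_nat (fact j))"
      using A ic l by (simp add: mexp_def carrier_matD)
    then show "mexp A $$ (i,l) * X $$ (l,c) = (\<Sum>j. (A ^\<^sub>m j) $$ (i,l) / of_nat (fact j) * X $$ (l,c))"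
      using suminf_mult2[OF summable_entry[OF A ic(1) l]] by simp
  qed
  also have "\<dots> = (\<Sum>j. \<Sum>l\<in>{0..<n}. (A ^\<^sub>m j) $$ (i,l) / of_nat (fact j) * X $$ (l,c))"
  proof (rule suminf_sum[symmetric])
    fix l assume "l \<in> {0..<n}"
    then show "summable (\<lambda>j. (A ^\<^sub>m j) $$ (i,l) / of_nat (fact j) * X $$ (l,c))"
      using summable_mult2[OF summable_entry[OF A ic(1)]] by simp
  qed
  also have "\<dots> = (\<Sum>j. ((A ^\<^sub>m j) * X) $$ (i,c) / of_nat (fact j))"
  proof -
    have "(\<Sum>l\<in>{0..<n}. (A ^\<^sub>m j) $$ (i,l) / of_nat (fact j) * X $$ (l,c)) = ((A ^\<^sub>m j) * X) $$ (i,c) / of_nat (fact j)" for j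
      using A X ic by (simp add: carrier_matD scalar_prod_def sum_divide_distrib)
    then show ?thesis by simp
  qed
  also have "\<dots> = (\<Sum>j. \<mu> ^ j / of_nat (fact j)) * X $$ (i,c)"
  proof -
    have "((A ^\<^sub>m j) * X) $$ (i,c) / of_nat (fact j) = \<mu> ^ j / of_nat (fact j) * X $$ (i,c)" for j
      unfolding pow_eigen[OF A X AX] using X ic by (simp add: carrier_matD)
    then show ?thesis using suminf_mult2[OF sums_summable[OF exp_series]] by simp
  qed
  also have "\<dots> = (exp \<mu> \<cdot>\<^sub>m X) $$ (i,c)"
    using X ic sums_unique[OF exp_series[of \<mu>]] by (simp add: carrier_matD mult.commute)
  finally show "(mexp A * X) $$ (i,c) = (exp \<mu> \<cdot>\<^sub>m X) $$ (i,c)" .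
qed (use A X in \<open>simp_all add: mexp_def carrier_matD\<close>)

fun fam :: "complex mat \<Rightarrow> complex mat \<Rightarrow> nat \<Rightarrow> (complex mat \<times> nat) set" where
  "fam P Q 0 = {(1\<^sub>m 1, 0)}"
| "fam P Q (Suc m) = (\<lambda>(X,k). (kron P X, k)) ` fam P Q m \<union> (\<lambda>(X,k). (kron Q X, Suc k)) ` fam P Q m"

inductive_set lclos :: "complex mat set \<Rightarrow> complex mat set" for F where
  base: "X \<in> F \<Longrightarrow> X \<in> lclos F"
| add: "A \<in> lclos F \<Longrightarrow> B \<in> lclos F \<Longrightarrow> A + B \<in> lclos F"

lemma lclos_carrier: assumes "F \<subseteq> carrier_mat N N" "C \<in> lclos F" shows "C \<in> carrier_mat N N"
  using assms(2)
proof induction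
  case (base X) then show ?case using assms(1) by blast
next
  case (add A B) then show ?case by simp
qed

lemma lclos_mult_eq: assumes F: "F \<subseteq> carrier_mat N N" and U: "U \<in> carrier_mat N N" and V: "V \<in> carrier_mat N N"
  and eq: "\<And>X. X \<in> F \<Longrightarrow> U * X = V * X" and C: "C \<in> lclos F"
  shows "U * C = V * C"
  using C
proof induction
  case (base X) then show ?case by (rule eq)
next
  case (add A B)
  have A: "A \<in> carrier_mat N N" and B: "B \<in> carrier_mat N N" using lclos_carrier[OF F] add.hyps by blast+
  have "U * (A + B) = U * A + U * B" using U A B by (rule mult_add_distrib_mat)
  also have "\<dots> = V * A + V * B" using add.IH by simp
  also have "\<dots> = V * (A + B)" using V A B by (rule mult_add_distrib_mat[symmetric])
  finally show ?case .
qed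

lemma lclos_vec: assumes F: "F \<subseteq> carrier_mat N N" and v: "v \<in> carrier_vec N"
  and eq: "\<And>X. X \<in> F \<Longrightarrow> X *\<^sub>v v = 0\<^sub>v N" and C: "C \<in> lclos F"
  shows "C *\<^sub>v v = 0\<^sub>v N"
  using C
proof induction
  case (base X) then show ?case by (rule eq)
next
  case (add A B)
  have A: "A \<in> carrier_mat N N" and B: "B \<in> carrier_mat N N" using lclos_carrier[OF F] add.hyps by blast+
  have "(A + B) *\<^sub>v v = A *\<^sub>v v + B *\<^sub>v v" using A B v by (rule add_mult_distrib_mat_vec)
  then show ?case using add.IH by simp
qed

locale hu =
  fixes H :: "complex mat" and d :: nat
  assumes Hc: "H \<in> carrier_mat d d" and dpos: "d > 0" and HH: "H * H = 1\<^sub>m d"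
begin

definition P where "P = (1/2) \<cdot>\<^sub>m (1\<^sub>m d + H)"
definition Q where "Q = (1/2) \<cdot>\<^sub>m (1\<^sub>m d + (-1) \<cdot>\<^sub>m H)"

lemma c1: "1\<^sub>m d + H \<in> carrier_mat d d" by (rule add_carrier_mat[OF Hc])
lemma c2: "1\<^sub>m d + (-1) \<cdot>\<^sub>m H \<in> carrier_mat d d" by (rule add_carrier_mat[OF smult_carrier_mat[OF Hc]])
lemma c3: "(-1) \<cdot>\<^sub>m H \<in> carrier_mat d d" by (rule smult_carrier_mat[OF Hc])

lemma Pc: "P \<in> carrier_mat d d" unfolding P_def using Hc by simp
lemma Qc: "Q \<in> carrier_mat d d" unfolding Q_def using Hc by simp

lemma PQ: "P + Q = 1\<^sub>m d"
proof (rule eq_matI)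
  fix i j assume "i < dim_row (1\<^sub>m d :: complex mat)" "j < dim_col (1\<^sub>m d :: complex mat)"
  then have ij: "i < d" "j < d" by simp_all
  then show "(P + Q) $$ (i,j) = 1\<^sub>m d $$ (i,j)" unfolding P_def Q_def using Hc by (simp add: carrier_matD field_simps)
qed (use Hc in \<open>simp_all add: P_def Q_def carrier_matD\<close>)

lemma HP: "H * P = P"
proof -
  have "H * P = (1/2) \<cdot>\<^sub>m (H * (1\<^sub>m d + H))" unfolding P_def by (rule mult_smult_distrib[OF Hc c1])
  also have "H * (1\<^sub>m d + H) = H * 1\<^sub>m d + H * H" by (rule mult_add_distrib_mat[OF Hc one_carrier_mat Hc])
  also have "\<dots> = 1\<^sub>m d + H" using Hc HH comm_add_mat[OF Hc one_carrier_mat] by simp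
  finally show ?thesis unfolding P_def .
qed

lemma PH: "P * H = P"
proof -
  have "P * H = (1/2) \<cdot>\<^sub>m ((1\<^sub>m d + H) * H)" unfolding P_def by (rule mult_smult_assoc_mat[OF c1 Hc])
  also have "(1\<^sub>m d + H) * H = 1\<^sub>m d * H + H * H" by (rule add_mult_distrib_mat[OF one_carrier_mat Hc Hc])
  also have "\<dots> = 1\<^sub>m d + H" using Hc HH comm_add_mat[OF Hc one_carrier_mat] by simp
  finally show ?thesis unfolding P_def .
qed

lemma HQ: "H * Q = (-1) \<cdot>\<^sub>m Q"
proof -
  have "H * Q = (1/2) \<cdot>\<^sub>m (H * (1\<^sub>m d + (-1) \<cdot>\<^sub>m H))" unfolding Q_def by (rule mult_smult_distrib[OF Hc c2])
  also have "H * (1\<^sub>m d + (-1) \<cdot>\<^sub>m H) = H * 1\<^sub>m d + H * ((-1) \<cdot>\<^sub>m H)" by (rule mult_add_distrib_mat[OF Hc one_carrier_mat c3])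
  also have "H * ((-1) \<cdot>\<^sub>m H) = (-1) \<cdot>\<^sub>m (H * H)" by (rule mult_smult_distrib[OF Hc Hc])
  also have "H * 1\<^sub>m d + (-1) \<cdot>\<^sub>m (H * H) = H + (-1) \<cdot>\<^sub>m 1\<^sub>m d" using Hc HH by simp
  finally have e: "H * Q = (1/2) \<cdot>\<^sub>m (H + (-1) \<cdot>\<^sub>m 1\<^sub>m d)" .
  show ?thesis unfolding e
  proof (rule eq_matI)
    fix i j assume "i < dim_row ((-1) \<cdot>\<^sub>m Q)" "j < dim_col ((-1) \<cdot>\<^sub>m Q)"
    then have ij: "i < d" "j < d" unfolding Q_def using Hc by (simp_all add: carrier_matD)
    then show "((1/2) \<cdot>\<^sub>m (H + (-1) \<cdot>\<^sub>m 1\<^sub>m d)) $$ (i,j) = ((-1) \<cdot>\<^sub>m Q) $$ (i,j)"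
      unfolding Q_def using Hc by (simp add: carrier_matD field_simps)
  qed (use Hc in \<open>simp_all add: Q_def carrier_matD\<close>)
qed

lemma QH: "Q * H = (-1) \<cdot>\<^sub>m Q"
proof -
  have "Q * H = (1/2) \<cdot>\<^sub>m ((1\<^sub>m d + (-1) \<cdot>\<^sub>m H) * H)" unfolding Q_def by (rule mult_smult_assoc_mat[OF c2 Hc])
  also have "(1\<^sub>m d + (-1) \<cdot>\<^sub>m H) * H = 1\<^sub>m d * H + ((-1) \<cdot>\<^sub>m H) * H" by (rule add_mult_distrib_mat[OF one_carrier_mat c3 Hc])
  also have "((-1) \<cdot>\<^sub>m H) * H = (-1) \<cdot>\<^sub>m (H * H)" by (rule mult_smult_assoc_mat[OF Hc Hc])
  also have "1\<^sub>m d * H + (-1) \<cdot>\<^sub>m (H * H) = H + (-1) \<cdot>\<^sub>m 1\<^sub>m d" using Hc HH by simp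
  finally have e: "Q * H = (1/2) \<cdot>\<^sub>m (H + (-1) \<cdot>\<^sub>m 1\<^sub>m d)" .
  show ?thesis unfolding e
  proof (rule eq_matI)
    fix i j assume "i < dim_row ((-1) \<cdot>\<^sub>m Q)" "j < dim_col ((-1) \<cdot>\<^sub>m Q)"
    then have ij: "i < d" "j < d" unfolding Q_def using Hc by (simp_all add: carrier_matD)
    then show "((1/2) \<cdot>\<^sub>m (H + (-1) \<cdot>\<^sub>m 1\<^sub>m d)) $$ (i,j) = ((-1) \<cdot>\<^sub>m Q) $$ (i,j)"
      unfolding Q_def using Hc by (simp add: carrier_matD field_simps)
  qed (use Hc in \<open>simp_all add: Q_def carrier_matD\<close>)
qed

lemma Gc: "tpow H m \<in> carrier_mat (d^m) (d^m)" by (rule tpow_carrier[OF Hc])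
lemma Mc: "Mp H m \<in> carrier_mat (d^m) (d^m)" by (rule Mp_carrier[OF Hc])
lemma drH: "dim_row H = d" using Hc by (simp add: carrier_matD)
lemma Npos: "(d^m::nat) > 0" using dpos by simp

lemma Mp_Suc: "Mp H (Suc m) = kron H (1\<^sub>m (d^m)) + kron (1\<^sub>m d) (Mp H m)"
  by (simp add: drH)

lemma step:
  assumes R: "R \<in> carrier_mat d d" and X: "X \<in> carrier_mat (d^m) (d^m)"
   and HR: "H * R = s \<cdot>\<^sub>m R" and RH: "R * H = s \<cdot>\<^sub>m R"
   and GX: "tpow H m * X = g \<cdot>\<^sub>m X" and XG: "X * tpow H m = g \<cdot>\<^sub>m X"
   and MX: "Mp H m * X = e \<cdot>\<^sub>m X" and XM: "X * Mp H m = e \<cdot>\<^sub>m X"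
  shows "tpow H (Suc m) * kron R X = (s*g) \<cdot>\<^sub>m kron R X"
    "kron R X * tpow H (Suc m) = (s*g) \<cdot>\<^sub>m kron R X"
    "Mp H (Suc m) * kron R X = (s+e) \<cdot>\<^sub>m kron R X"
    "kron R X * Mp H (Suc m) = (s+e) \<cdot>\<^sub>m kron R X"
proof -
  note N = Npos[of m]
  have K: "kron R X \<in> carrier_mat (d * d^m) (d * d^m)" by (rule kron_carrier[OF R X])
  have K1: "kron H (1\<^sub>m (d^m)) \<in> carrier_mat (d * d^m) (d * d^m)" by (rule kron_carrier[OF Hc one_carrier_mat])
  have K2: "kron (1\<^sub>m d) (Mp H m) \<in> carrier_mat (d * d^m) (d * d^m)" by (rule kron_carrier[OF one_carrier_mat Mc])
  have "tpow H (Suc m) * kron R X = kron (H * R) (tpow H m * X)"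
    by (simp only: tpow.simps) (rule kron_mult[OF Hc Gc R X N N N])
  also have "\<dots> = (s*g) \<cdot>\<^sub>m kron R X" unfolding HR GX by (simp add: kron_smult_left kron_smult_right smult_smult_mat mult.commute)
  finally show "tpow H (Suc m) * kron R X = (s*g) \<cdot>\<^sub>m kron R X" .
  have "kron R X * tpow H (Suc m) = kron (R * H) (X * tpow H m)"
    by (simp only: tpow.simps) (rule kron_mult[OF R X Hc Gc N N N])
  also have "\<dots> = (s*g) \<cdot>\<^sub>m kron R X" unfolding RH XG by (simp add: kron_smult_left kron_smult_right smult_smult_mat mult.commute)
  finally show "kron R X * tpow H (Suc m) = (s*g) \<cdot>\<^sub>m kron R X" .
  have a1: "kron H (1\<^sub>m (d^m)) * kron R X = s \<cdot>\<^sub>m kron R X"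
  proof -
    have "kron H (1\<^sub>m (d^m)) * kron R X = kron (H * R) (1\<^sub>m (d^m) * X)" by (rule kron_mult[OF Hc one_carrier_mat R X N N N])
    also have "\<dots> = s \<cdot>\<^sub>m kron R X" unfolding HR using X by (simp add: kron_smult_left)
    finally show ?thesis .
  qed
  have a2: "kron (1\<^sub>m d) (Mp H m) * kron R X = e \<cdot>\<^sub>m kron R X"
  proof -
    have "kron (1\<^sub>m d) (Mp H m) * kron R X = kron (1\<^sub>m d * R) (Mp H m * X)" by (rule kron_mult[OF one_carrier_mat Mc R X N N N])
    also have "\<dots> = e \<cdot>\<^sub>m kron R X" unfolding MX using R by (simp add: kron_smult_right)
    finally show ?thesis .
  qed
  have "Mp H (Suc m) * kron R X = kron H (1\<^sub>m (d^m)) * kron R X + kron (1\<^sub>m d) (Mp H m) * kron R X"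
    unfolding Mp_Suc by (rule add_mult_distrib_mat[OF K1 K2 K])
  also have "\<dots> = (s+e) \<cdot>\<^sub>m kron R X" unfolding a1 a2 by (rule add_smult_distrib_right_mat[OF K, symmetric])
  finally show "Mp H (Suc m) * kron R X = (s+e) \<cdot>\<^sub>m kron R X" .
  have b1: "kron R X * kron H (1\<^sub>m (d^m)) = s \<cdot>\<^sub>m kron R X"
  proof -
    have "kron R X * kron H (1\<^sub>m (d^m)) = kron (R * H) (X * 1\<^sub>m (d^m))" by (rule kron_mult[OF R X Hc one_carrier_mat N N N])
    also have "\<dots> = s \<cdot>\<^sub>m kron R X" unfolding RH using X by (simp add: kron_smult_left)
    finally show ?thesis .
  qed
  have b2: "kron R X * kron (1\<^sub>m d) (Mp H m) = e \<cdot>\<^sub>m kron R X"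
  proof -
    have "kron R X * kron (1\<^sub>m d) (Mp H m) = kron (R * 1\<^sub>m d) (X * Mp H m)" by (rule kron_mult[OF R X one_carrier_mat Mc N N N])
    also have "\<dots> = e \<cdot>\<^sub>m kron R X" unfolding XM using R by (simp add: kron_smult_right)
    finally show ?thesis .
  qed
  have "kron R X * Mp H (Suc m) = kron R X * kron H (1\<^sub>m (d^m)) + kron R X * kron (1\<^sub>m d) (Mp H m)"
    unfolding Mp_Suc by (rule mult_add_distrib_mat[OF K K1 K2])
  also have "\<dots> = (s+e) \<cdot>\<^sub>m kron R X" unfolding b1 b2 by (rule add_smult_distrib_right_mat[OF K, symmetric])
  finally show "kron R X * Mp H (Suc m) = (s+e) \<cdot>\<^sub>m kron R X" .
qed

lemma fam_props: "(X,k) \<in> fam P Q m \<Longrightarrow> X \<in> carrier_mat (d^m) (d^m) \<and> k \<le> m \<and>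
   tpow H m * X = ((-1)^k) \<cdot>\<^sub>m X \<and> X * tpow H m = ((-1)^k) \<cdot>\<^sub>m X \<and>
   Mp H m * X = (of_nat m - 2 * of_nat k) \<cdot>\<^sub>m X \<and> X * Mp H m = (of_nat m - 2 * of_nat k) \<cdot>\<^sub>m X"
proof (induction m arbitrary: X k)
  case 0
  then have Xk: "X = 1\<^sub>m 1" "k = 0" by simp_all
  have z: "0\<^sub>m 1 1 = (0::complex) \<cdot>\<^sub>m 1\<^sub>m 1" by (rule eq_matI) simp_all
  show ?case unfolding Xk using z by (simp add: one_smult_mat')
next
  case (Suc m)
  from Suc.prems obtain X' k' where mem: "(X',k') \<in> fam P Q m" and
    cases: "(X = kron P X' \<and> k = k') \<or> (X = kron Q X' \<and> k = Suc k')" by auto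
  note IH = Suc.IH[OF mem]
  have X': "X' \<in> carrier_mat (d^m) (d^m)" using IH by blast
  from cases show ?case
  proof
    assume c: "X = kron P X' \<and> k = k'"
    have HP': "H * P = 1 \<cdot>\<^sub>m P" and PH': "P * H = 1 \<cdot>\<^sub>m P" using HP PH by (simp_all add: one_smult_mat')
    note st = step[OF Pc X' HP' PH', of "(-1)^k'" "of_nat m - 2 * of_nat k'"]
    have e: "1 + (of_nat m - 2 * of_nat k' :: complex) = of_nat (Suc m) - 2 * of_nat k'" by simp
    show ?thesis using c IH st kron_carrier[OF Pc X'] unfolding e by simp
  next
    assume c: "X = kron Q X' \<and> k = Suc k'"
    note st = step[OF Qc X' HQ QH, of "(-1)^k'" "of_nat m - 2 * of_nat k'"]
    have e: "-1 + (of_nat m - 2 * of_nat k' :: complex) = of_nat (Suc m) - 2 * of_nat (Suc k')" by simp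
    have e2: "(-1) * (-1)^k' = ((-1)^(Suc k') :: complex)" by simp
    show ?thesis using c IH st kron_carrier[OF Qc X'] unfolding e e2 by simp
  qed
qed

lemma fam_carrier: "fst ` fam P Q m \<subseteq> carrier_mat (d^m) (d^m)"
  using fam_props by force

lemma kron_lclos: assumes C: "C \<in> lclos (fst ` fam P Q m)" and R: "R = P \<or> R = Q"
  shows "kron R C \<in> lclos (fst ` fam P Q (Suc m))"
  using C
proof induction
  case (base X)
  then obtain k where Xk: "(X,k) \<in> fam P Q m" by force
  have "(kron R X, if R = P then k else Suc k) \<in> fam P Q (Suc m)"
    using R Xk by (cases "R = P") force+
  then have "kron R X \<in> fst ` fam P Q (Suc m)" by force
  then show ?case by (rule lclos.base)
next
  case (add A B)
  have A: "A \<in> carrier_mat (d^m) (d^m)" and B: "B \<in> carrier_mat (d^m) (d^m)"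
    using lclos_carrier[OF fam_carrier] add.hyps by blast+
  have Rc: "R \<in> carrier_mat d d" using R Pc Qc by blast
  have "kron R (A + B) = kron R A + kron R B" by (rule kron_add_right[OF Rc A B Npos Npos])
  then show ?case using add.IH lclos.add by simp
qed

lemma one_lclos: "1\<^sub>m (d^m) \<in> lclos (fst ` fam P Q m)"
proof (induction m)
  case 0 then show ?case by (simp add: lclos.base)
next
  case (Suc m)
  have "1\<^sub>m (d^Suc m) = kron (1\<^sub>m d) (1\<^sub>m (d^m))" using kron_one[OF Npos, of d] by simp
  also have "\<dots> = kron (P + Q) (1\<^sub>m (d^m))" by (simp add: PQ)
  also have "\<dots> = kron P (1\<^sub>m (d^m)) + kron Q (1\<^sub>m (d^m))" by (rule kron_add_left[OF Pc Qc one_carrier_mat Npos Npos])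
  finally show ?case using kron_lclos[OF Suc.IH] lclos.add by simp
qed

lemma fam_allP: "(tpow P m, 0) \<in> fam P Q m"
  by (induction m) force+

lemma fam_allQ: "(tpow Q m, m) \<in> fam P Q m"
  by (induction m) force+

lemma fam_oneQ: "(kron Q (tpow P m), 1) \<in> fam P Q (Suc m)"
  using fam_allP[of m] by force

end

lemma smult_nz_eq: assumes "a \<cdot>\<^sub>m X = b \<cdot>\<^sub>m X" "nz X" shows "a = (b::complex)"
proof -
  obtain i j where ij: "i < dim_row X" "j < dim_col X" "X $$ (i,j) \<noteq> 0" using assms(2) unfolding nz_def by blast
  have "(a \<cdot>\<^sub>m X) $$ (i,j) = (b \<cdot>\<^sub>m X) $$ (i,j)" using assms(1) by simp
  then have "a * X $$ (i,j) = b * X $$ (i,j)" using ij by simp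
  then show ?thesis using ij(3) by simp
qed

lemma cos_eq_m1: assumes "cos x = -1" shows "\<bar>x\<bar> \<ge> pi"
proof (rule ccontr)
  assume "\<not> \<bar>x\<bar> \<ge> pi"
  then have lt: "\<bar>x\<bar> < pi" by simp
  have c: "cos \<bar>x\<bar> = cos x" by (rule cos_abs_real)
  have "cos \<bar>x\<bar> = cos pi" unfolding c assms by simp
  then have "\<bar>x\<bar> = pi" using cos_inj_pi[of "\<bar>x\<bar>" pi] lt by simp
  then show False using lt by simp
qed

lemma finite_eigenvalues: assumes A: "(A::complex mat) \<in> carrier_mat n n"
  shows "finite {k. eigenvalue A k}"
proof -
  have cf: "coeff (char_poly A) n = 1" using degree_monic_char_poly[OF A] by (rule conjunct2)
  have "char_poly A \<noteq> 0"
  proof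
    assume "char_poly A = 0"
    then have "coeff (char_poly A) n = 0" by simp
    then show False using cf by simp
  qed
  then have "finite {k. poly (char_poly A) k = 0}" by (rule poly_roots_finite)
  moreover have "{k. eigenvalue A k} = {k. poly (char_poly A) k = 0}" using eigenvalue_root_char_poly[OF A] by blast
  ultimately show ?thesis by simp
qed


lemma smult_mat_vec: assumes A: "(A::complex mat) \<in> carrier_mat n k" and v: "v \<in> carrier_vec k"
  shows "(a \<cdot>\<^sub>m A) *\<^sub>v v = a \<cdot>\<^sub>v (A *\<^sub>v v)"
proof (rule eq_vecI)
  fix i assume "i < dim_vec (a \<cdot>\<^sub>v (A *\<^sub>v v))"
  then have i: "i < n" using A by (simp add: carrier_matD)
  show "((a \<cdot>\<^sub>m A) *\<^sub>v v) $ i = (a \<cdot>\<^sub>v (A *\<^sub>v v)) $ i"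
    using A v i by (simp add: carrier_matD scalar_prod_def sum_distrib_left mult.assoc)
qed (use A in \<open>simp add: carrier_matD\<close>)

lemma spread_le: assumes A: "(A::complex mat) \<in> carrier_mat n n"
  and b: "\<And>\<mu>. eigenvalue A \<mu> \<Longrightarrow> a \<le> Re \<mu> \<and> Re \<mu> \<le> b" and e: "eigenvalue A \<mu>0"
  shows "spread A \<le> b - a"
proof -
  have fin: "finite (Re ` {k. eigenvalue A k})" using finite_eigenvalues[OF A] by simp
  have ne: "Re ` {k. eigenvalue A k} \<noteq> {}" using e by blast
  have "Max (Re ` {k. eigenvalue A k}) \<le> b" using fin ne b by (simp add: Max_le_iff)
  moreover have "a \<le> Min (Re ` {k. eigenvalue A k})" using fin ne b by (simp add: Min_ge_iff)
  ultimately show ?thesis unfolding spread_def by simp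
qed

lemma spread_ge: assumes A: "(A::complex mat) \<in> carrier_mat n n"
  and e1: "eigenvalue A \<mu>1" and e2: "eigenvalue A \<mu>2"
  shows "Re \<mu>1 - Re \<mu>2 \<le> spread A"
proof -
  have fin: "finite (Re ` {k. eigenvalue A k})" using finite_eigenvalues[OF A] by simp
  have "Re \<mu>1 \<le> Max (Re ` {k. eigenvalue A k})" using fin e1 by (intro Max_ge) simp_all
  moreover have "Min (Re ` {k. eigenvalue A k}) \<le> Re \<mu>2" using fin e2 by (intro Min_le) simp_all
  ultimately show ?thesis unfolding spread_def by simp
qed

context hu
begin

lemma mexp_fam: assumes Hx: "Hx \<in> carrier_mat (d^m) (d^m)"
  and ev: "Hx * X = e \<cdot>\<^sub>m X" and mem: "(X,k) \<in> fam P Q m"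
  shows "mexp (c \<cdot>\<^sub>m Hx) * X = exp (c * e) \<cdot>\<^sub>m X"
proof -
  have X: "X \<in> carrier_mat (d^m) (d^m)" using fam_props[OF mem] by blast
  have "(c \<cdot>\<^sub>m Hx) * X = c \<cdot>\<^sub>m (Hx * X)" by (rule mult_smult_assoc_mat[OF Hx X])
  also have "\<dots> = (c * e) \<cdot>\<^sub>m X" unfolding ev by (rule smult_smult_mat)
  finally show ?thesis by (rule mexp_eigen[OF smult_carrier_mat[OF Hx] X])
qed

lemma mexp_target: assumes Hx: "Hx \<in> carrier_mat (d^m) (d^m)"
  and ev: "\<And>X k. (X,k) \<in> fam P Q m \<Longrightarrow> Hx * X = ev k \<cdot>\<^sub>m X"
  and tg: "\<And>k. k \<le> m \<Longrightarrow> exp (c * ev k) = z * (-1)^k"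
  shows "mexp (c \<cdot>\<^sub>m Hx) = z \<cdot>\<^sub>m tpow H m"
proof -
  have U: "mexp (c \<cdot>\<^sub>m Hx) \<in> carrier_mat (d^m) (d^m)" using Hx unfolding mexp_def carrier_mat_def by simp
  have V: "z \<cdot>\<^sub>m tpow H m \<in> carrier_mat (d^m) (d^m)" using Gc by simp
  have eq: "mexp (c \<cdot>\<^sub>m Hx) * X = (z \<cdot>\<^sub>m tpow H m) * X" if XF: "X \<in> fst ` fam P Q m" for X
  proof -
    obtain k where mem: "(X,k) \<in> fam P Q m" using XF by force
    note fp = fam_props[OF mem]
    have X: "X \<in> carrier_mat (d^m) (d^m)" using fp by blast
    have km: "k \<le> m" using fp by blast
    have GX: "tpow H m * X = ((-1)^k) \<cdot>\<^sub>m X" using fp by blast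
    have "mexp (c \<cdot>\<^sub>m Hx) * X = exp (c * ev k) \<cdot>\<^sub>m X" by (rule mexp_fam[OF Hx ev[OF mem] mem])
    also have "\<dots> = (z * (-1)^k) \<cdot>\<^sub>m X" unfolding tg[OF km] ..
    also have "\<dots> = z \<cdot>\<^sub>m (tpow H m * X)" unfolding GX by (rule smult_smult_mat[symmetric])
    also have "\<dots> = (z \<cdot>\<^sub>m tpow H m) * X" by (rule mult_smult_assoc_mat[OF Gc X, symmetric])
    finally show ?thesis .
  qed
  have "mexp (c \<cdot>\<^sub>m Hx) * 1\<^sub>m (d^m) = (z \<cdot>\<^sub>m tpow H m) * 1\<^sub>m (d^m)"
    by (rule lclos_mult_eq[OF fam_carrier U V eq one_lclos])
  then show ?thesis unfolding right_mult_one_mat[OF U] right_mult_one_mat[OF V] .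
qed

lemma eig_char: assumes Hx: "Hx \<in> carrier_mat (d^m) (d^m)"
  and ev: "\<And>X k. (X,k) \<in> fam P Q m \<Longrightarrow> X * Hx = ev k \<cdot>\<^sub>m X"
  and e: "eigenvalue (l \<cdot>\<^sub>m Hx) \<mu>"
  shows "\<exists>X k. (X,k) \<in> fam P Q m \<and> \<mu> = l * ev k"
proof (rule ccontr)
  assume nex: "\<not> (\<exists>X k. (X,k) \<in> fam P Q m \<and> \<mu> = l * ev k)"
  obtain v where "eigenvector (l \<cdot>\<^sub>m Hx) v \<mu>" using e unfolding eigenvalue_def by blast
  moreover have "dim_row (l \<cdot>\<^sub>m Hx) = d^m" using Hx by (simp add: carrier_matD)
  ultimately have v: "v \<in> carrier_vec (d^m)" "v \<noteq> 0\<^sub>v (d^m)" "(l \<cdot>\<^sub>m Hx) *\<^sub>v v = \<mu> \<cdot>\<^sub>v v"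
    unfolding eigenvector_def by simp_all
  have lH: "l \<cdot>\<^sub>m Hx \<in> carrier_mat (d^m) (d^m)" using Hx by simp
  have z: "X *\<^sub>v v = 0\<^sub>v (d^m)" if XF: "X \<in> fst ` fam P Q m" for X
  proof -
    obtain k where mem: "(X,k) \<in> fam P Q m" using XF by force
    have X: "X \<in> carrier_mat (d^m) (d^m)" using fam_props[OF mem] by blast
    have ne: "\<mu> \<noteq> l * ev k" using nex mem by blast
    have "X *\<^sub>v ((l \<cdot>\<^sub>m Hx) *\<^sub>v v) = (X * (l \<cdot>\<^sub>m Hx)) *\<^sub>v v" using X lH v(1) by simp
    also have "X * (l \<cdot>\<^sub>m Hx) = l \<cdot>\<^sub>m (X * Hx)" by (rule mult_smult_distrib[OF X Hx])
    also have "\<dots> = (l * ev k) \<cdot>\<^sub>m X" unfolding ev[OF mem] by (rule smult_smult_mat)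
    finally have a: "X *\<^sub>v ((l \<cdot>\<^sub>m Hx) *\<^sub>v v) = (l * ev k) \<cdot>\<^sub>v (X *\<^sub>v v)"
      using X v(1) by (simp add: smult_mat_vec)
    have b: "X *\<^sub>v ((l \<cdot>\<^sub>m Hx) *\<^sub>v v) = \<mu> \<cdot>\<^sub>v (X *\<^sub>v v)" unfolding v(3) by (rule mult_mat_vec[OF X v(1)])
    show ?thesis
    proof (rule eq_vecI)
      fix i assume "i < dim_vec (0\<^sub>v (d^m) :: complex vec)"
      then have i: "i < d^m" by simp
      have "((l * ev k) \<cdot>\<^sub>v (X *\<^sub>v v)) $ i = (\<mu> \<cdot>\<^sub>v (X *\<^sub>v v)) $ i" using a b by simp
      then have "(l * ev k) * (X *\<^sub>v v) $ i = \<mu> * (X *\<^sub>v v) $ i" using i X by (simp add: carrier_matD)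
      then have "(X *\<^sub>v v) $ i = 0" using ne by (metis mult_cancel_right)
      then show "(X *\<^sub>v v) $ i = 0\<^sub>v (d^m) $ i" using i by simp
    qed (use X in \<open>simp add: carrier_matD\<close>)
  qed
  have "1\<^sub>m (d^m) *\<^sub>v v = 0\<^sub>v (d^m)" by (rule lclos_vec[OF fam_carrier v(1) z one_lclos])
  then show False using v by simp
qed

lemma eig_exists: assumes Hx: "Hx \<in> carrier_mat (d^m) (d^m)"
  and ev: "Hx * X = e \<cdot>\<^sub>m X" and mem: "(X,k) \<in> fam P Q m" and nzX: "nz X"
  shows "eigenvalue (l \<cdot>\<^sub>m Hx) (l * e)"
proof -
  have X: "X \<in> carrier_mat (d^m) (d^m)" using fam_props[OF mem] by blast
  obtain i j where ij: "i < dim_row X" "j < dim_col X" "X $$ (i,j) \<noteq> 0" using nzX unfolding nz_def by blast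
  have ij': "i < d^m" "j < d^m" using ij X by (simp_all add: carrier_matD)
  define v where "v = col X j"
  have vc: "v \<in> carrier_vec (d^m)" unfolding v_def using X by (simp add: carrier_matD carrier_vecI)
  have vnz: "v \<noteq> 0\<^sub>v (d^m)"
  proof
    assume "v = 0\<^sub>v (d^m)"
    then have "v $ i = 0" using ij' by simp
    then show False using ij ij' X unfolding v_def by (simp add: carrier_matD)
  qed
  have "(l \<cdot>\<^sub>m Hx) * X = l \<cdot>\<^sub>m (Hx * X)" by (rule mult_smult_assoc_mat[OF Hx X])
  also have "\<dots> = (l * e) \<cdot>\<^sub>m X" unfolding ev by (rule smult_smult_mat)
  finally have M: "(l \<cdot>\<^sub>m Hx) * X = (l * e) \<cdot>\<^sub>m X" .
  have "(l \<cdot>\<^sub>m Hx) *\<^sub>v v = col ((l \<cdot>\<^sub>m Hx) * X) j" unfolding v_def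
    by (rule col_mult2[OF smult_carrier_mat[OF Hx] X ij'(2), symmetric])
  also have "\<dots> = (l * e) \<cdot>\<^sub>v v" unfolding M v_def
  proof (rule eq_vecI)
    fix r assume "r < dim_vec ((l * e) \<cdot>\<^sub>v col X j)"
    then have r: "r < d^m" using X by (simp add: carrier_matD)
    then show "col ((l * e) \<cdot>\<^sub>m X) j $ r = ((l * e) \<cdot>\<^sub>v col X j) $ r" using X ij' by (simp add: carrier_matD)
  qed (use X in \<open>simp add: carrier_matD\<close>)
  finally have "(l \<cdot>\<^sub>m Hx) *\<^sub>v v = (l * e) \<cdot>\<^sub>v v" .
  then show ?thesis unfolding eigenvalue_def eigenvector_def using vc vnz Hx by (intro exI[of _ v]) (simp add: carrier_matD)
qed

lemma time_generic:
  fixes Hx :: "complex mat" and r :: "nat \<Rightarrow> real" and E \<tau> \<phi>0 :: real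
  assumes Hx: "Hx \<in> carrier_mat (d^m) (d^m)"
  and evL: "\<And>X k. (X,k) \<in> fam P Q m \<Longrightarrow> Hx * X = complex_of_real (r k) \<cdot>\<^sub>m X"
  and evR: "\<And>X k. (X,k) \<in> fam P Q m \<Longrightarrow> X * Hx = complex_of_real (r k) \<cdot>\<^sub>m X"
  and bnd: "\<And>k. k \<le> m \<Longrightarrow> \<bar>r k\<bar> \<le> E" and Epos: "E > 0"
  and top: "(Xt,kt) \<in> fam P Q m" "nz Xt" "r kt = E"
  and bot: "(Xb,kb) \<in> fam P Q m" "nz Xb" "r kb = -E"
  and z0: "(X0,0) \<in> fam P Q m" "nz X0" and z1: "(X1,1) \<in> fam P Q m" "nz X1" and r01: "r 0 = r 1 + 2"
  and wit: "\<And>k. k \<le> m \<Longrightarrow> exp (-(\<i> * complex_of_real (pi/2)) * complex_of_real (r k)) = exp (\<i> * complex_of_real \<phi>0) * (-1)^k"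
  and tau: "\<tau> > 0"
  shows "impl_time Hx H m \<tau> = pi * E / \<tau>"
proof -
  define S where "S = {t::real. t \<ge> 0 \<and> (\<exists>(l::real) (\<phi>::real).
      spread (complex_of_real l \<cdot>\<^sub>m Hx) \<le> \<tau> \<and>
      mexp ((- (\<i> * complex_of_real t * complex_of_real l)) \<cdot>\<^sub>m Hx) = exp (\<i> * complex_of_real \<phi>) \<cdot>\<^sub>m tpow H m)}"
  have T: "impl_time Hx H m \<tau> = Inf S" unfolding impl_time_def S_def ..
  have lHc: "complex_of_real l \<cdot>\<^sub>m Hx \<in> carrier_mat (d^m) (d^m)" for l using Hx by simp
  have mem: "pi * E / \<tau> \<in> S"
  proof -
    define l where "l = \<tau> / (2 * E)"
    have lpos: "l > 0" unfolding l_def using tau Epos by simp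
    have "spread (complex_of_real l \<cdot>\<^sub>m Hx) \<le> l * E - (- (l * E))"
    proof (rule spread_le[OF lHc])
      fix \<mu> assume "eigenvalue (complex_of_real l \<cdot>\<^sub>m Hx) \<mu>"
      from eig_char[where ev="\<lambda>k. complex_of_real (r k)", OF Hx evR this] obtain X k where Xk: "(X,k) \<in> fam P Q m"
        and mu: "\<mu> = complex_of_real l * complex_of_real (r k)" by blast
      have "k \<le> m" using fam_props[OF Xk] by blast
      then have rk: "\<bar>r k\<bar> \<le> E" by (rule bnd)
      have "Re \<mu> = l * r k" unfolding mu by simp
      moreover have "\<bar>l * r k\<bar> \<le> l * E" using rk lpos by (simp add: abs_mult)
      ultimately show "- (l * E) \<le> Re \<mu> \<and> Re \<mu> \<le> l * E" by (simp add: abs_le_iff)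
    next
      show "eigenvalue (complex_of_real l \<cdot>\<^sub>m Hx) (complex_of_real l * complex_of_real (r kt))"
        by (rule eig_exists[OF Hx evL[OF top(1)] top(1) top(2)])
    qed
    also have "l * E - (- (l * E)) = \<tau>" unfolding l_def using Epos by (simp add: field_simps)
    finally have sp: "spread (complex_of_real l \<cdot>\<^sub>m Hx) \<le> \<tau>" .
    have tl: "- (\<i> * complex_of_real (pi * E / \<tau>) * complex_of_real l) = -(\<i> * complex_of_real (pi/2))"
    proof -
      have "pi * E / \<tau> * l = pi / 2" unfolding l_def using Epos tau by (simp add: field_simps)
      then have "complex_of_real (pi * E / \<tau>) * complex_of_real l = complex_of_real (pi/2)"
        by (metis of_real_mult)
      then show ?thesis by (simp only: mult.assoc)
    qed
    have me: "mexp ((- (\<i> * complex_of_real (pi * E / \<tau>) * complex_of_real l)) \<cdot>\<^sub>m Hx) = exp (\<i> * complex_of_real \<phi>0) \<cdot>\<^sub>m tpow H m"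
      unfolding tl by (rule mexp_target[where ev="\<lambda>k. complex_of_real (r k)", OF Hx evL wit])
    have "pi * E / \<tau> \<ge> 0" using Epos tau by simp
    then show ?thesis unfolding S_def using sp me by blast
  qed
  have low: "pi * E / \<tau> \<le> t" if tS: "t \<in> S" for t
  proof -
    from tS obtain l \<phi> where t0: "t \<ge> 0" and sp: "spread (complex_of_real l \<cdot>\<^sub>m Hx) \<le> \<tau>"
      and me: "mexp ((- (\<i> * complex_of_real t * complex_of_real l)) \<cdot>\<^sub>m Hx) = exp (\<i> * complex_of_real \<phi>) \<cdot>\<^sub>m tpow H m"
      unfolding S_def by blast
    define c where "c = - (\<i> * complex_of_real t * complex_of_real l)"
    have e1: "eigenvalue (complex_of_real l \<cdot>\<^sub>m Hx) (complex_of_real l * complex_of_real (r kt))"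
      by (rule eig_exists[OF Hx evL[OF top(1)] top(1) top(2)])
    have e2: "eigenvalue (complex_of_real l \<cdot>\<^sub>m Hx) (complex_of_real l * complex_of_real (r kb))"
      by (rule eig_exists[OF Hx evL[OF bot(1)] bot(1) bot(2)])
    have s1: "l * E - l * (-E) \<le> \<tau>" using spread_ge[OF lHc e1 e2] sp top(3) bot(3) by simp
    have s2: "l * (-E) - l * E \<le> \<tau>" using spread_ge[OF lHc e2 e1] sp top(3) bot(3) by simp
    have lE: "2 * \<bar>l\<bar> * E \<le> \<tau>" using s1 s2 by (cases "l \<ge> 0") (simp_all add: algebra_simps)
    have fx: "exp (c * complex_of_real (r k)) = exp (\<i> * complex_of_real \<phi>) * (-1)^k"
      if mem: "(X,k) \<in> fam P Q m" and nzX: "nz X" for X k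
    proof -
      note fp = fam_props[OF mem]
      have X: "X \<in> carrier_mat (d^m) (d^m)" using fp by blast
      have GX: "tpow H m * X = ((-1)^k) \<cdot>\<^sub>m X" using fp by blast
      have "exp (c * complex_of_real (r k)) \<cdot>\<^sub>m X = mexp (c \<cdot>\<^sub>m Hx) * X"
        by (rule mexp_fam[OF Hx evL[OF mem] mem, symmetric])
      also have "\<dots> = (exp (\<i> * complex_of_real \<phi>) \<cdot>\<^sub>m tpow H m) * X" unfolding c_def me ..
      also have "\<dots> = exp (\<i> * complex_of_real \<phi>) \<cdot>\<^sub>m (tpow H m * X)" by (rule mult_smult_assoc_mat[OF Gc X])
      also have "\<dots> = (exp (\<i> * complex_of_real \<phi>) * (-1)^k) \<cdot>\<^sub>m X" unfolding GX by (rule smult_smult_mat)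
      finally show ?thesis using nzX by (rule smult_nz_eq)
    qed
    have f0: "exp (c * complex_of_real (r 0)) = exp (\<i> * complex_of_real \<phi>)" using fx[OF z0] by simp
    have f1: "exp (c * complex_of_real (r 1)) = - exp (\<i> * complex_of_real \<phi>)" using fx[OF z1] by simp
    have "exp (c * complex_of_real (r 1)) * exp (2 * c) = exp (c * complex_of_real (r 0))"
      unfolding r01 by (simp add: exp_add[symmetric] algebra_simps)
    also have "\<dots> = exp (\<i> * complex_of_real \<phi>)" by (rule f0)
    also have "\<dots> = exp (c * complex_of_real (r 1)) * (-1)" using f1 by simp
    finally have "exp (c * complex_of_real (r 1)) * exp (2 * c) = exp (c * complex_of_real (r 1)) * (-1)" .
    then have ex: "exp (2 * c) = -1" by (metis exp_not_eq_zero mult_left_cancel)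
    have "Re (exp (2 * c)) = cos (Im (2 * c))" by (simp add: Re_exp c_def)
    moreover have "Im (2 * c) = - (2 * t * l)" unfolding c_def by simp
    ultimately have "cos (2 * t * l) = -1" using ex by (simp add: mult_ac)
    then have "\<bar>2 * t * l\<bar> \<ge> pi" by (rule cos_eq_m1)
    then have pl: "pi \<le> 2 * t * \<bar>l\<bar>" using t0 by (simp add: abs_mult)
    have "pi * E \<le> (2 * t * \<bar>l\<bar>) * E" using pl Epos by simp
    also have "\<dots> = t * (2 * \<bar>l\<bar> * E)" by simp
    also have "\<dots> \<le> t * \<tau>" using lE t0 by (intro mult_left_mono) simp_all
    finally show ?thesis using tau by (simp add: pos_divide_le_eq)
  qed
  show ?thesis unfolding T by (rule cInf_eq_minimum[OF mem low])
qed

end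


lemma wit_par: assumes "k \<le> m"
  shows "exp (-(\<i> * complex_of_real (pi/2)) * complex_of_real (real m - 2 * real k)) = exp (\<i> * complex_of_real (-(pi * real m / 2))) * (-1)^k"
proof -
  have "-(\<i> * complex_of_real (pi/2)) * complex_of_real (real m - 2 * real k) = \<i> * complex_of_real (-(pi * real m / 2)) + of_nat k * (\<i> * complex_of_real pi)"
    by (simp add: algebra_simps)
  then show ?thesis by (simp only: exp_add exp_of_nat_mult exp_pi_i')
qed

lemma wit_coh:
  shows "exp (-(\<i> * complex_of_real (pi/2)) * complex_of_real ((-1)^k)) = exp (\<i> * complex_of_real (-(pi / 2))) * (-1)^k"
proof (cases "even k")
  case True
  then have "((-1)^k :: real) = 1" "((-1)^k :: complex) = 1" by simp_all
  then show ?thesis by simp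
next
  case False
  then have e: "((-1)^k :: real) = -1" "((-1)^k :: complex) = -1" by simp_all
  have "-(\<i> * complex_of_real (pi/2)) * complex_of_real (-1) = \<i> * complex_of_real (-(pi / 2)) + \<i> * complex_of_real pi"
    by (simp add: algebra_simps)
  then have "exp (-(\<i> * complex_of_real (pi/2)) * complex_of_real (-1)) = exp (\<i> * complex_of_real (-(pi / 2))) * (-1)"
    by (simp only: exp_add exp_pi_i')
  then show ?thesis unfolding e .
qed

lemma zero_smult_eigen: assumes Hx: "(Hx::complex mat) \<in> carrier_mat N N" and e: "eigenvalue (0 \<cdot>\<^sub>m Hx) \<mu>"
  shows "\<mu> = 0"
proof -
  obtain v where "eigenvector (0 \<cdot>\<^sub>m Hx) v \<mu>" using e unfolding eigenvalue_def by blast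
  moreover have "dim_row (0 \<cdot>\<^sub>m Hx) = N" using Hx by (simp add: carrier_matD)
  ultimately have v: "v \<in> carrier_vec N" "v \<noteq> 0\<^sub>v N" "(0 \<cdot>\<^sub>m Hx) *\<^sub>v v = \<mu> \<cdot>\<^sub>v v"
    unfolding eigenvector_def by simp_all
  have "(0 \<cdot>\<^sub>m Hx) *\<^sub>v v = 0 \<cdot>\<^sub>v (Hx *\<^sub>v v)" by (rule smult_mat_vec[OF Hx v(1)])
  then have z: "\<mu> \<cdot>\<^sub>v v = 0 \<cdot>\<^sub>v (Hx *\<^sub>v v)" using v(3) by simp
  obtain i where i: "i < N" "v $ i \<noteq> 0"
  proof (rule ccontr)
    assume "\<not> thesis"
    then have "\<forall>i<N. v $ i = 0" using that by blast
    then have "v = 0\<^sub>v N" using v(1) by (intro eq_vecI) (simp_all add: carrier_vecD)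
    then show False using v(2) by simp
  qed
  have "(\<mu> \<cdot>\<^sub>v v) $ i = (0 \<cdot>\<^sub>v (Hx *\<^sub>v v)) $ i" using z by simp
  then have "\<mu> * v $ i = 0" using i v(1) Hx by (simp add: carrier_vecD carrier_matD)
  then show ?thesis using i by simp
qed

lemma trivial_time:
  assumes Hx: "(Hx::complex mat) \<in> carrier_mat N N" and N: "N > 0" and G: "tpow H m = s \<cdot>\<^sub>m 1\<^sub>m N"
    and s: "s = 1 \<or> s = -1" and tau: "\<tau> > 0"
  shows "impl_time Hx H m \<tau> = 0"
proof -
  define S where "S = {t::real. t \<ge> 0 \<and> (\<exists>(l::real) (\<phi>::real).
      spread (complex_of_real l \<cdot>\<^sub>m Hx) \<le> \<tau> \<and>
      mexp ((- (\<i> * complex_of_real t * complex_of_real l)) \<cdot>\<^sub>m Hx) = exp (\<i> * complex_of_real \<phi>) \<cdot>\<^sub>m tpow H m)}"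
  have T: "impl_time Hx H m \<tau> = Inf S" unfolding impl_time_def S_def ..
  have A0: "0 \<cdot>\<^sub>m Hx \<in> carrier_mat N N" using Hx by simp
  have ev0: "eigenvalue (0 \<cdot>\<^sub>m Hx) 0"
  proof -
    have "(0 \<cdot>\<^sub>m Hx) *\<^sub>v unit_vec N 0 = 0 \<cdot>\<^sub>v (Hx *\<^sub>v unit_vec N 0)" by (rule smult_mat_vec[OF Hx unit_vec_carrier])
    also have "\<dots> = 0 \<cdot>\<^sub>v unit_vec N 0" by (rule eq_vecI) (use Hx in \<open>simp_all add: carrier_matD\<close>)
    finally have a: "(0 \<cdot>\<^sub>m Hx) *\<^sub>v unit_vec N 0 = 0 \<cdot>\<^sub>v unit_vec N 0" .
    have b: "unit_vec N 0 \<noteq> (0\<^sub>v N :: complex vec)"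
    proof
      assume "unit_vec N 0 = (0\<^sub>v N :: complex vec)"
      then have "(unit_vec N 0 :: complex vec) $ 0 = 0\<^sub>v N $ 0" by simp
      then show False using N by simp
    qed
    show ?thesis unfolding eigenvalue_def eigenvector_def using a b Hx
      by (intro exI[of _ "unit_vec N 0"]) (simp add: carrier_matD)
  qed
  have sp: "spread (complex_of_real 0 \<cdot>\<^sub>m Hx) \<le> \<tau>"
  proof -
    have "spread (0 \<cdot>\<^sub>m Hx) \<le> 0 - 0"
    proof (rule spread_le[OF A0 _ ev0])
      fix \<mu> assume "eigenvalue (0 \<cdot>\<^sub>m Hx) \<mu>"
      then have "\<mu> = 0" by (rule zero_smult_eigen[OF Hx])
      then show "0 \<le> Re \<mu> \<and> Re \<mu> \<le> 0" by simp
    qed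
    then show ?thesis using tau by simp
  qed
  have M1: "mexp (0 \<cdot>\<^sub>m Hx) = 1\<^sub>m N"
  proof -
    have "(0 \<cdot>\<^sub>m Hx) * 1\<^sub>m N = 0 \<cdot>\<^sub>m 1\<^sub>m N" by (rule eq_matI) (use Hx in \<open>simp_all add: carrier_matD\<close>)
    from mexp_eigen[OF A0 one_carrier_mat this] have "mexp (0 \<cdot>\<^sub>m Hx) * 1\<^sub>m N = 1\<^sub>m N" by (simp add: one_smult_mat')
    moreover have "mexp (0 \<cdot>\<^sub>m Hx) \<in> carrier_mat N N" using Hx unfolding mexp_def carrier_mat_def by simp
    ultimately show ?thesis by (simp add: right_mult_one_mat)
  qed
  obtain \<phi> :: real where ph: "exp (\<i> * complex_of_real \<phi>) * s = 1"
  proof (cases "s = 1")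
    case True then show ?thesis using that[of 0] by simp
  next
    case False then have "s = -1" using s by simp
    then show ?thesis using that[of pi] by simp
  qed
  have me: "mexp ((- (\<i> * complex_of_real 0 * complex_of_real 0)) \<cdot>\<^sub>m Hx) = exp (\<i> * complex_of_real \<phi>) \<cdot>\<^sub>m tpow H m"
    unfolding G smult_smult_mat ph using M1 by (simp add: one_smult_mat')
  have mem: "0 \<in> S" unfolding S_def using sp me by blast
  have low: "0 \<le> t" if "t \<in> S" for t using that unfolding S_def by blast
  show ?thesis unfolding T by (rule cInf_eq_minimum[OF mem low])
qed


context hu
begin

lemma P_zero: assumes "\<not> nz P" shows "H = (-1) \<cdot>\<^sub>m 1\<^sub>m d"
proof (rule eq_matI)
  fix i j assume "i < dim_row ((-1) \<cdot>\<^sub>m 1\<^sub>m d :: complex mat)" "j < dim_col ((-1) \<cdot>\<^sub>m 1\<^sub>m d :: complex mat)"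
  then have ij: "i < d" "j < d" by simp_all
  have "P $$ (i,j) = 0" using assms ij Pc unfolding nz_def by (metis carrier_matD(1,2))
  then have "(1/2) * ((if i = j then 1 else 0) + H $$ (i,j)) = 0" unfolding P_def using ij Hc by (simp add: carrier_matD)
  then show "H $$ (i,j) = ((-1) \<cdot>\<^sub>m 1\<^sub>m d) $$ (i,j)" using ij by (simp add: add_eq_0_iff)
qed (use Hc in \<open>simp_all add: carrier_matD\<close>)

lemma Q_zero: assumes "\<not> nz Q" shows "H = 1 \<cdot>\<^sub>m 1\<^sub>m d"
proof (rule eq_matI)
  fix i j assume "i < dim_row (1 \<cdot>\<^sub>m 1\<^sub>m d :: complex mat)" "j < dim_col (1 \<cdot>\<^sub>m 1\<^sub>m d :: complex mat)"
  then have ij: "i < d" "j < d" by simp_all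
  have "Q $$ (i,j) = 0" using assms ij Qc unfolding nz_def by (metis carrier_matD(1,2))
  then have "(1/2) * ((if i = j then 1 else 0) + (- H $$ (i,j))) = 0" unfolding Q_def using ij Hc by (simp add: carrier_matD)
  then show "H $$ (i,j) = (1 \<cdot>\<^sub>m 1\<^sub>m d) $$ (i,j)" using ij by (simp add: add_eq_0_iff)
qed (use Hc in \<open>simp_all add: carrier_matD\<close>)

lemma main_hu: assumes m: "m \<ge> 1" and tau: "\<tau> > 0"
  shows "impl_time (Mp H m) H m \<tau> = real m * impl_time (tpow H m) H m \<tau>"
proof (cases "nz P \<and> nz Q")
  case True
  then have nP: "nz P" and nQ: "nz Q" by simp_all
  obtain m' where m': "m = Suc m'" using m by (cases m) simp_all
  have aP: "(tpow P m, 0) \<in> fam P Q m" by (rule fam_allP)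
  have aQ: "(tpow Q m, m) \<in> fam P Q m" by (rule fam_allQ)
  have oQ: "(kron Q (tpow P m'), 1) \<in> fam P Q m" unfolding m' by (rule fam_oneQ)
  have nzaP: "nz (tpow P m)" by (rule nz_tpow[OF nP])
  have nzaQ: "nz (tpow Q m)" by (rule nz_tpow[OF nQ])
  have nzoQ: "nz (kron Q (tpow P m'))" by (rule nz_kron[OF nQ nz_tpow[OF nP]])
  have mpos: "real m > 0" using m by simp
  have parL: "Mp H m * X = complex_of_real (real m - 2 * real k) \<cdot>\<^sub>m X" if "(X,k) \<in> fam P Q m" for X k
    using fam_props[OF that] by simp
  have parR: "X * Mp H m = complex_of_real (real m - 2 * real k) \<cdot>\<^sub>m X" if "(X,k) \<in> fam P Q m" for X k
    using fam_props[OF that] by simp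
  have parB: "\<bar>real m - 2 * real k\<bar> \<le> real m" if "k \<le> m" for k using that by simp
  have Tpar: "impl_time (Mp H m) H m \<tau> = pi * real m / \<tau>"
    by (rule time_generic[OF Mc parL parR parB mpos aP nzaP _ aQ nzaQ _ aP nzaP oQ nzoQ _ wit_par tau]) simp_all
  have cohL: "tpow H m * X = complex_of_real ((-1)^k) \<cdot>\<^sub>m X" if "(X,k) \<in> fam P Q m" for X k
    using fam_props[OF that] by simp
  have cohR: "X * tpow H m = complex_of_real ((-1)^k) \<cdot>\<^sub>m X" if "(X,k) \<in> fam P Q m" for X k
    using fam_props[OF that] by simp
  have cohB: "\<bar>(-1::real)^k\<bar> \<le> 1" if "k \<le> m" for k by simp
  have Tcoh: "impl_time (tpow H m) H m \<tau> = pi * 1 / \<tau>"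
    by (rule time_generic[OF Gc cohL cohR cohB _ aP nzaP _ oQ nzoQ _ aP nzaP oQ nzoQ _ wit_coh tau]) simp_all
  show ?thesis unfolding Tpar Tcoh by simp
next
  case False
  obtain c where Hc1: "H = c \<cdot>\<^sub>m 1\<^sub>m d" and c: "c = 1 \<or> c = -1"
    using False P_zero Q_zero by blast
  have G: "tpow H m = c^m \<cdot>\<^sub>m 1\<^sub>m (d^m)" unfolding Hc1 tpow_smult tpow_one[OF dpos] ..
  have s: "c^m = 1 \<or> c^m = -1" using c by (cases "even m") auto
  have Np: "d^m > 0" using dpos by simp
  show ?thesis using trivial_time[OF Mc Np G s tau] trivial_time[OF Gc Np G s tau] by simp
qed

end


theorem mainTheorem2:
  fixes H :: "complex mat" and d m :: nat and \<tau> :: real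
  assumes "d \<ge> 1" and "H \<in> carrier_mat d d"
    and "hermitian_mat H" and "unitary_mat H"
    and "m \<ge> 1" and "\<tau> > 0"
  shows "impl_time (H_par H m) H m \<tau> = real m * impl_time (H_coh H m) H m \<tau>"
proof -
  have Hc: "H \<in> carrier_mat d d" by (rule assms(2))
  have dpos: "d > 0" using assms(1) by simp
  have adjH: "adj H = H" using assms(3) unfolding hermitian_mat_def by blast
  have "H * adj H = 1\<^sub>m (dim_row H)" using assms(4) unfolding unitary_mat_def by blast
  then have HH: "H * H = 1\<^sub>m d" using adjH Hc by (simp add: carrier_matD)
  interpret hu H d by unfold_locales (rule Hc, rule dpos, rule HH)
  have "H_par H m = Mp H m" by (rule H_par_Mp[OF Hc dpos])
  then show ?thesis unfolding H_coh_def using main_hu[OF assms(5) assms(6)] by simp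
qed

end
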